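(* Let $\mathcal{L}\subseteq\mathcal{L}_n$ be a nonzero linear subspace invariant under the conjugation action of $S_n$. Then $\mathcal{L}\cap\mathcal{L}_n^+$ contains a nonzero matrix if and only if $J\in\mathcal{L}$ (equivalently $\operatorname{span}_{\mathbb{R}}(J)\subseteq\mathcal{L}$, where $\operatorname{span}_{\mathbb{R}}(J)$ is the trivial $S_n$-module).
   Context: Let $\mathbf{1}\in\mathbb{R}^n$ be the all-ones column vector, $\mathcal{L}_n=\{Q\in \mathrm{Mat}_n(\mathbb{R}): Q\mathbf{1}=0\}$, and $\mathcal{L}_n^+$ the set of $Q\in\mathcal{L}_n$ with nonnegative off-diagonal entries. $J:=\frac1n\mathbf{1}\mathbf{1}^T-I_n$ (the rate matrix with all off-diagonal entries $\frac1n$). For $\sigma\in S_n$, $K_\sigma$ is the permutation matrix with $e_iK_\sigma=e_{\sigma(i)}$; the conjugation action is $\sigma\cdot X=K_\sigma^TXK_\sigma$, and a subspace is invariant if it is closed under this action for all $\sigma\in S_n$. *)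

theory Defs
  imports "HOL-Analysis.Analysis"
begin

text \<open>n x n real matrices are represented as real^'n^'n, with n = CARD('n).\<close>

definition ones_vec :: "real ^ 'n" where
  "ones_vec = (\<chi> i. 1)"

definition Lrate :: "(real ^ 'n ^ 'n) set" where
  "Lrate = {Q. Q *v ones_vec = 0}"

definition Lrate_plus :: "(real ^ 'n ^ 'n) set" where
  "Lrate_plus = {Q \<in> Lrate. \<forall>i j. i \<noteq> j \<longrightarrow> Q $ i $ j \<ge> 0}"

definition Jmat :: "real ^ 'n ^ 'n" where
  "Jmat = (\<chi> i j. 1 / real CARD('n) - (if i = j then 1 else 0))"

definition perm_mat :: "('n \<Rightarrow> 'n) \<Rightarrow> real ^ 'n ^ 'n" where
  "perm_mat \<sigma> = (\<chi> i j. if j = \<sigma> i then 1 else 0)"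

definition perm_conj :: "('n \<Rightarrow> 'n) \<Rightarrow> real ^ 'n ^ 'n \<Rightarrow> real ^ 'n ^ 'n" where
  "perm_conj \<sigma> X = transpose (perm_mat \<sigma>) ** X ** perm_mat \<sigma>"

definition Sn_invariant :: "(real ^ 'n ^ 'n) set \<Rightarrow> bool" where
  "Sn_invariant L \<longleftrightarrow> (\<forall>\<sigma>. \<sigma> permutes (UNIV :: 'n set) \<longrightarrow> (\<forall>X \<in> L. perm_conj \<sigma> X \<in> L))"

end

theory Submission
  imports Defs "HOL-Combinatorics.Permutations"
begin

lemma conj_entry:
  assumes "\<sigma> permutes (UNIV :: 'n::finite set)"
  shows "perm_conj \<sigma> (Q :: real^'n^'n) $ i $ j = Q $ (inv \<sigma> i) $ (inv \<sigma> j)"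
proof -
  have e: "\<And>a b. (b = \<sigma> a) \<longleftrightarrow> (a = inv \<sigma> b)"
    using assms permutes_inv_eq by metis
  have ifd: "\<And>P (x::real). (if P then 1 else 0) * x = (if P then x else 0)"
     "\<And>P (x::real). x * (if P then 1 else 0) = (if P then x else 0)" by auto
  have 1: "\<And>k. (transpose (perm_mat \<sigma>) ** Q) $ i $ k = Q $ (inv \<sigma> i) $ k"
    by (simp add: matrix_matrix_mult_def transpose_def perm_mat_def e ifd cong: if_cong)
  have 2: "\<And>X::real^'n^'n. (X ** perm_mat \<sigma>) $ i $ j = X $ i $ (inv \<sigma> j)"
    by (simp add: matrix_matrix_mult_def perm_mat_def e ifd cong: if_cong)
  show ?thesis by (simp add: perm_conj_def 2 1)
qed

lemma row_sum:
  assumes "(Q :: real^'n::finite^'n) \<in> Lrate"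
  shows "(\<Sum>j\<in>UNIV. Q $ i $ j) = 0"
proof -
  have "(Q *v ones_vec) $ i = 0" using assms by (simp add: Lrate_def)
  thus ?thesis by (simp add: matrix_vector_mult_def ones_vec_def)
qed

lemma offdiag_nonzero:
  assumes "(Q :: real^'n::finite^'n) \<in> Lrate" "Q \<noteq> 0"
  shows "\<exists>i j. i \<noteq> j \<and> Q $ i $ j \<noteq> 0"
proof (rule ccontr)
  assume "\<not> ?thesis"
  hence off: "\<And>i j. i \<noteq> j \<Longrightarrow> Q $ i $ j = 0" by blast
  have "\<And>i. Q $ i $ i = 0"
  proof -
    fix i
    have "(\<Sum>j\<in>UNIV. Q $ i $ j) = (\<Sum>j\<in>UNIV. if j = i then Q $ i $ i else 0)"
      by (rule sum.cong) (auto simp: off)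
    thus "Q $ i $ i = 0" using row_sum[OF assms(1), of i] by simp
  qed
  hence "Q = 0" using off by (metis vec_eq_iff zero_index)
  thus False using assms by simp
qed

lemma two_perm:
  assumes "k \<noteq> (l::'n)" "i \<noteq> j"
  shows "\<exists>\<tau>. \<tau> permutes (UNIV::'n set) \<and> \<tau> k = i \<and> \<tau> l = j"
proof -
  define t1 where "t1 = Transposition.transpose k i"
  define l' where "l' = t1 l"
  have "l' \<noteq> i" using assms unfolding l'_def t1_def by (auto simp: Transposition.transpose_def split: if_splits)
  define \<tau> where "\<tau> = Transposition.transpose l' j \<circ> t1"
  have "\<tau> permutes UNIV" unfolding \<tau>_def t1_def
    by (intro permutes_compose permutes_swap_id) auto
  moreover have "\<tau> k = i" using \<open>l' \<noteq> i\<close> assms unfolding \<tau>_def t1_def by (auto simp: Transposition.transpose_def)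
  moreover have "\<tau> l = j" unfolding \<tau>_def l'_def by (auto simp: Transposition.transpose_def)
  ultimately show ?thesis by blast
qed

theorem mainTheorem10:
  fixes L :: "(real ^ 'n ^ 'n) set"
  assumes "subspace L"
    and "L \<subseteq> Lrate"
    and "L \<noteq> {0}"
    and "Sn_invariant L"
  shows "(\<exists>Q \<in> L \<inter> Lrate_plus. Q \<noteq> 0) \<longleftrightarrow> Jmat \<in> L"
proof
  assume "Jmat \<in> L"
  obtain Q where "Q \<in> L" "Q \<noteq> 0" using assms(1,3) subspace_0 by blast
  then obtain a b :: 'n where ab: "a \<noteq> b" using offdiag_nonzero assms(2) by blast
  have "(Jmat :: real^'n^'n) \<in> Lrate_plus"
  proof -
    have "Jmat *v ones_vec = (0::real^'n)"
    proof (subst vec_eq_iff, intro allI)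
      fix i :: 'n
      have "(\<Sum>j\<in>UNIV. (1 / real CARD('n) - (if i = j then 1 else 0))) = (0::real)"
        by (simp add: sum_subtractf)
      thus "(Jmat *v ones_vec) $ i = (0::real^'n) $ i"
        by (simp add: matrix_vector_mult_def ones_vec_def Jmat_def)
    qed
    thus ?thesis by (simp add: Lrate_plus_def Lrate_def Jmat_def)
  qed
  moreover have "(Jmat :: real^'n^'n) \<noteq> 0"
  proof
    assume "Jmat = (0::real^'n^'n)"
    hence "Jmat $ a $ b = (0::real)" by simp
    moreover have "Jmat $ a $ b = 1 / real CARD('n)" using ab by (simp add: Jmat_def)
    ultimately show False by simp
  qed
  ultimately show "\<exists>Q \<in> L \<inter> Lrate_plus. Q \<noteq> 0" using \<open>Jmat \<in> L\<close> by blast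
next
  assume "\<exists>Q \<in> L \<inter> Lrate_plus. Q \<noteq> 0"
  then obtain Q where Q: "Q \<in> L" "Q \<in> Lrate_plus" "Q \<noteq> 0" by blast
  have QR: "Q \<in> Lrate" using Q(2) by (simp add: Lrate_plus_def)
  have Qnn: "\<And>a b. a \<noteq> b \<Longrightarrow> Q $ a $ b \<ge> 0" using Q(2) by (simp add: Lrate_plus_def)
  obtain a0 b0 :: 'n where ab0: "a0 \<noteq> b0" "Q $ a0 $ b0 \<noteq> 0" using offdiag_nonzero QR Q(3) by blast
  let ?P = "{p. p permutes (UNIV::'n set)}"
  define M where "M = (\<Sum>\<sigma>\<in>?P. perm_conj \<sigma> Q)"
  have MinL: "M \<in> L" unfolding M_def
    using assms(1,4) Q(1) by (intro subspace_sum) (auto simp: Sn_invariant_def)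
  have Ment: "M $ i $ j = (\<Sum>\<sigma>\<in>?P. Q $ (\<sigma> i) $ (\<sigma> j))" for i j
  proof -
    have "M $ i $ j = (\<Sum>\<sigma>\<in>?P. Q $ (inv \<sigma> i) $ (inv \<sigma> j))"
      unfolding M_def by (simp add: conj_entry)
    also have "\<dots> = (\<Sum>\<sigma>\<in>?P. Q $ (inv (inv \<sigma>) i) $ (inv (inv \<sigma>) j))"
      by (rule sum_permutations_inverse)
    also have "\<dots> = (\<Sum>\<sigma>\<in>?P. Q $ (\<sigma> i) $ (\<sigma> j))"
      by (rule sum.cong) (auto simp: permutes_inv_inv)
    finally show ?thesis .
  qed
  have Minv: "M $ k $ l = M $ i $ j" if "\<tau> permutes UNIV" "\<tau> k = i" "\<tau> l = j" for \<tau> k l i j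
  proof -
    have "M $ k $ l = (\<Sum>\<sigma>\<in>?P. Q $ ((\<sigma> \<circ> \<tau>) k) $ ((\<sigma> \<circ> \<tau>) l))"
      unfolding Ment by (rule sum_permutations_compose_right[OF that(1)])
    thus ?thesis using that by (simp add: Ment)
  qed
  define c where "c = M $ a0 $ b0"
  define d where "d = M $ a0 $ a0"
  have Moff: "M $ i $ j = c" if "i \<noteq> j" for i j
    using two_perm[OF that ab0(1)] Minv unfolding c_def by metis
  have Mdiag: "M $ i $ i = d" for i
  proof -
    have "Transposition.transpose i a0 permutes UNIV" by (rule permutes_swap_id) auto
    thus ?thesis using Minv[of "Transposition.transpose i a0" i a0 i a0] unfolding d_def
      by (simp add: transpose_def)
  qed
  have cpos: "c > 0"
  proof -
    have nn: "\<And>\<sigma>. \<sigma> \<in> ?P \<Longrightarrow> Q $ (\<sigma> a0) $ (\<sigma> b0) \<ge> 0"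
      using ab0(1) Qnn by (metis mem_Collect_eq permutes_inj injD)
    have "c \<ge> 0" unfolding c_def Ment by (rule sum_nonneg) (use nn in auto)
    moreover have "c \<noteq> 0"
    proof
      assume "c = 0"
      hence "\<forall>\<sigma>\<in>?P. Q $ (\<sigma> a0) $ (\<sigma> b0) = 0"
        unfolding c_def Ment using sum_nonneg_eq_0_iff[of ?P "\<lambda>\<sigma>. Q $ (\<sigma> a0) $ (\<sigma> b0)"] nn
          finite_permutations[of "UNIV::'n set"] by auto
      moreover have "id \<in> ?P" by (simp add: permutes_id)
      ultimately show False using ab0(2) by (metis id_apply)
    qed
    ultimately show ?thesis by simp
  qed
  have rs: "d + (real CARD('n) - 1) * c = 0"
  proof -
    have "0 = (\<Sum>j\<in>UNIV. M $ a0 $ j)" using row_sum[of M a0] MinL assms(2) by auto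
    also have "\<dots> = M $ a0 $ a0 + (\<Sum>j\<in>UNIV - {a0}. M $ a0 $ j)"
      by (simp add: sum.remove)
    also have "(\<Sum>j\<in>UNIV - {a0}. M $ a0 $ j) = (\<Sum>j\<in>UNIV - {a0}. c)"
      by (rule sum.cong) (auto simp: Moff)
    also have "\<dots> = (real CARD('n) - 1) * c"
      by (simp add: card_Diff_singleton of_nat_diff)
    finally show ?thesis by (simp add: Mdiag)
  qed
  have npos: "real CARD('n) > 0" by simp
  have "Jmat = (1 / (real CARD('n) * c)) *\<^sub>R M"
  proof (subst vec_eq_iff, intro allI, subst vec_eq_iff, intro allI)
    fix i j :: 'n
    show "Jmat $ i $ j = ((1 / (real CARD('n) * c)) *\<^sub>R M) $ i $ j"
    proof (cases "i = j")
      case True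
      have "d = - (real CARD('n) - 1) * c" using rs by (simp add: algebra_simps)
      hence dd: "d = c - c * real CARD('n)" by (simp add: algebra_simps)
      show ?thesis using True cpos npos by (simp add: Jmat_def Mdiag field_simps dd algebra_simps power2_eq_square)
    next
      case False
      thus ?thesis using cpos npos by (simp add: Jmat_def Moff)
    qed
  qed
  thus "Jmat \<in> L" using MinL assms(1) by (metis subspace_scale subspace_mul)
qed

end
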